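(* Fix an integer $b\ge2$ and let $X$ be the negative definite plumbed 4-manifold with boundary $I_{30(b-2)+19}=Y(b;(2,1),(3,2),(5,1))$ whose plumbing graph has vertices $v_1,\dots,v_5$: $v_5$ central of weight $-b$; $v_1$ of weight $-2$ adjacent only to $v_5$; $v_3$ of weight $-2$ adjacent to $v_5$ and $v_2$; $v_2$ of weight $-2$ adjacent only to $v_3$; $v_4$ of weight $-5$ adjacent only to $v_5$. Let $Q$ be its intersection form in the basis $v_1,\dots,v_5$, let $Q^n$ be the orthogonal sum of $n$ copies, with basis $v^i_1,\dots,v^i_5$ for the $i$-th copy. If $\rho$ is a lattice embedding of $Q^n$ into the standard negative definite lattice $(\mathbb{Z}^{5n},\langle-1\rangle^{5n})$ with standard basis $e_1,\dots,e_{5n}$, then, up to automorphisms of the standard lattice, for $i=1,\dots,n$: $\rho(v_1^i)=e_{1+5(i-1)}-e_{2+5(i-1)}$, $\rho(v_2^i)=e_{3+5(i-1)}-e_{4+5(i-1)}$, $\rho(v_3^i)=e_{4+5(i-1)}-e_{5+5(i-1)}$, and $\rho(v_4^i)=\pm(e_{1+5(\sigma_1(i)-1)}+e_{2+5(\sigma_1(i)-1)})\pm(e_{3+5(\sigma_2(i)-1)}+e_{4+5(\sigma_2(i)-1)}+e_{5+5(\sigma_2(i)-1)})$, for some permutations $\sigma_1,\sigma_2$ of $\{1,\dots,n\}$.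
   Context: $(\mathbb{Z}^{5n},\langle-1\rangle^{5n})$ denotes $\mathbb{Z}^{5n}$ with $e_i\cdot e_j=-\delta_{ij}$; a lattice embedding is an injective homomorphism preserving the pairing. In the intersection form, $v_j\cdot v_j$ is the weight and $v_j\cdot v_k=1$ if adjacent, $0$ otherwise. *)

theory Defs
  imports Main "HOL-Combinatorics.Permutations" "HOL-Library.Function_Algebras"
begin

text \<open>Vectors of the standard lattice Z^N are functions nat => int supported on {1..N};
  coordinate k is the coefficient of the standard basis vector e_k.\<close>

definition std_vec :: "nat \<Rightarrow> (nat \<Rightarrow> int) \<Rightarrow> bool" where
  "std_vec N x \<longleftrightarrow> (\<forall>k. x k \<noteq> 0 \<longrightarrow> k \<in> {1..N})"

definition std_pair :: "nat \<Rightarrow> (nat \<Rightarrow> int) \<Rightarrow> (nat \<Rightarrow> int) \<Rightarrow> int" where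
  "std_pair N x y = - (\<Sum>k\<in>{1..N}. x k * y k)"

definition e :: "nat \<Rightarrow> nat \<Rightarrow> int" where
  "e k = (\<lambda>m. if m = k then 1 else 0)"

definition std_lattice_aut :: "nat \<Rightarrow> ((nat \<Rightarrow> int) \<Rightarrow> (nat \<Rightarrow> int)) \<Rightarrow> bool" where
  "std_lattice_aut N A \<longleftrightarrow>
     (\<forall>x y. std_vec N x \<longrightarrow> std_vec N y \<longrightarrow> A (x + y) = A x + A y) \<and>
     bij_betw A {x. std_vec N x} {x. std_vec N x} \<and>
     (\<forall>x y. std_vec N x \<longrightarrow> std_vec N y \<longrightarrow> std_pair N (A x) (A y) = std_pair N x y)"

definition Qform :: "int \<Rightarrow> nat \<Rightarrow> nat \<Rightarrow> int" where
  "Qform b j j' =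
     (if j = j' then (if j = 4 then -5 else if j = 5 then -b else -2)
      else if {j, j'} = {1, 5} \<or> {j, j'} = {3, 5} \<or> {j, j'} = {2, 3} \<or> {j, j'} = {4, 5}
      then 1 else 0)"

definition Qn :: "int \<Rightarrow> nat \<Rightarrow> nat \<Rightarrow> nat \<Rightarrow> nat \<Rightarrow> int" where
  "Qn b i j i' j' = (if i = i' then Qform b j j' else 0)"

text \<open>A lattice embedding of Q^n into (Z^{5n}, <-1>^{5n}), given by the images
  rho i j of the basis vectors v^i_j: the images lie in Z^{5n}, the pairing is
  preserved, and the induced homomorphism is injective.\<close>
definition lattice_embedding :: "int \<Rightarrow> nat \<Rightarrow> (nat \<Rightarrow> nat \<Rightarrow> (nat \<Rightarrow> int)) \<Rightarrow> bool" where
  "lattice_embedding b n rho \<longleftrightarrow>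
     (\<forall>i\<in>{1..n}. \<forall>j\<in>{1..5}. std_vec (5*n) (rho i j)) \<and>
     (\<forall>i\<in>{1..n}. \<forall>j\<in>{1..5}. \<forall>i'\<in>{1..n}. \<forall>j'\<in>{1..5}.
        std_pair (5*n) (rho i j) (rho i' j') = Qn b i j i' j') \<and>
     (\<forall>c :: nat \<Rightarrow> nat \<Rightarrow> int.
        (\<forall>k. (\<Sum>i\<in>{1..n}. \<Sum>j\<in>{1..5}. c i j * rho i j k) = 0) \<longrightarrow>
        (\<forall>i\<in>{1..n}. \<forall>j\<in>{1..5}. c i j = 0))"

end

theory Submission
  imports Defs
begin



definition dot :: "nat \<Rightarrow> (nat \<Rightarrow> int) \<Rightarrow> (nat \<Rightarrow> int) \<Rightarrow> int" where
  "dot N x y = (\<Sum>k\<in>{1..N}. x k * y k)"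

lemma std_pair_dot: "std_pair N x y = - dot N x y"
  by (simp add: std_pair_def dot_def)

lemma sq_small:
  fixes f :: "nat \<Rightarrow> int" and m :: int
  assumes fin: "finite S" and s: "(\<Sum>k\<in>S. (f k)^2) = m" and m4: "m < 4"
  shows "(\<forall>k\<in>S. f k \<in> {-1,0,1}) \<and> int (card {k\<in>S. f k \<noteq> 0}) = m"
proof -
  have le: "(f k)^2 \<le> m" if "k \<in> S" for k
    using member_le_sum[of k S "\<lambda>k. (f k)^2"] fin that s by auto
  have u: "f k \<in> {-1,0,1}" if "k \<in> S" for k
  proof -
    have "(f k)^2 < 4" using le[OF that] m4 by simp
    have "\<bar>f k\<bar> < 2"
    proof (rule ccontr)
      assume "\<not> \<bar>f k\<bar> < 2"
      hence "2^2 \<le> \<bar>f k\<bar>^2" by (intro power_mono) auto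
      thus False using \<open>(f k)^2 < 4\<close> by simp
    qed
    thus ?thesis by auto
  qed
  have "(\<Sum>k\<in>S. (f k)^2) = (\<Sum>k\<in>S. if f k \<noteq> 0 then 1 else 0)"
  proof (rule sum.cong)
    fix k assume "k \<in> S"
    hence "f k \<in> {-1,0,1}" by (rule u)
    thus "(f k)^2 = (if f k \<noteq> 0 then 1 else 0)" by auto
  qed simp
  also have "\<dots> = int (card {k\<in>S. f k \<noteq> 0})"
    using fin by (simp add: sum.If_cases, intro arg_cong[where f=card], blast)
  finally show ?thesis using u s by simp
qed

definition unitv :: "(nat \<Rightarrow> int) \<Rightarrow> bool" where
  "unitv u \<longleftrightarrow> (\<forall>k. u k \<in> {-1,0,1})"

lemma norm2_rep:
  assumes sv: "std_vec N u" and d: "dot N u u = 2"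
  shows "\<exists>a b. a \<noteq> b \<and> a \<in> {1..N} \<and> b \<in> {1..N} \<and> (\<forall>k. u k \<noteq> 0 \<longleftrightarrow> (k = a \<or> k = b)) \<and> unitv u"
proof -
  have "(\<Sum>k\<in>{1..N}. (u k)^2) = 2" using d by (simp add: dot_def power2_eq_square)
  from sq_small[OF _ this] have u: "\<forall>k\<in>{1..N}. u k \<in> {-1,0,1}" and c: "card {k\<in>{1..N}. u k \<noteq> 0} = 2"
    by auto
  from c obtain a b where ab: "{k\<in>{1..N}. u k \<noteq> 0} = {a,b}" "a \<noteq> b" by (auto simp: card_2_iff)
  have out: "u k = 0" if "k \<notin> {1..N}" for k using sv that unfolding std_vec_def by blast
  have "\<forall>k. u k \<noteq> 0 \<longleftrightarrow> (k = a \<or> k = b)"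
  proof
    fix k show "u k \<noteq> 0 \<longleftrightarrow> (k = a \<or> k = b)"
      using ab(1) out[of k] by (cases "k \<in> {1..N}") auto
  qed
  moreover have "unitv u" unfolding unitv_def using u out by (metis insertCI)
  moreover have "a \<in> {1..N}" "b \<in> {1..N}" using ab(1) by auto
  ultimately show ?thesis using ab(2) by blast
qed

lemma dot_supp2:
  assumes "a \<noteq> b" "a \<in> {1..N}" "b \<in> {1..N}" "\<forall>k. u k \<noteq> 0 \<longleftrightarrow> (k = a \<or> k = b)"
  shows "dot N u v = u a * v a + u b * v b"
proof -
  have "dot N u v = (\<Sum>k\<in>{a,b}. u k * v k)"
    unfolding dot_def by (rule sum.mono_neutral_right) (use assms in auto)
  thus ?thesis using assms(1) by simp
qed

lemma share:
  assumes su: "std_vec N u" "dot N u u = 2" and sw: "std_vec N w" "dot N w w = 2"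
    and d0: "dot N u w = 0" and k: "u k \<noteq> 0" "w k \<noteq> 0"
  shows "\<forall>k. u k \<noteq> 0 \<longleftrightarrow> w k \<noteq> 0"
proof -
  obtain a b where ab: "a \<noteq> b" "a \<in> {1..N}" "b \<in> {1..N}" "\<forall>k. u k \<noteq> 0 \<longleftrightarrow> (k = a \<or> k = b)" "unitv u"
    using norm2_rep[OF su] by blast
  obtain c d where cd: "c \<noteq> d" "c \<in> {1..N}" "d \<in> {1..N}" "\<forall>k. w k \<noteq> 0 \<longleftrightarrow> (k = c \<or> k = d)" "unitv w"
    using norm2_rep[OF sw] by blast
  have e: "u a * w a + u b * w b = 0" using d0 dot_supp2[OF ab(1-4)] by simp
  have ua: "u a \<noteq> 0" "u b \<noteq> 0" using ab(4) by auto
  have "w a \<noteq> 0 \<or> w b \<noteq> 0" using k ab(4) by auto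
  hence both: "w a \<noteq> 0 \<and> w b \<noteq> 0" using e ua by auto
  hence "{a,b} = {c,d}" using cd(4) ab(1) by auto
  thus ?thesis using ab(4) cd(4) by auto
qed

lemma parity:
  assumes "unitv u" "unitv w" "\<forall>k. u k \<noteq> 0 \<longleftrightarrow> w k \<noteq> 0"
  shows "even (dot N u z - dot N w z)"
proof -
  have "dot N u z - dot N w z = (\<Sum>k\<in>{1..N}. (u k - w k) * z k)"
    by (simp add: dot_def sum_subtractf left_diff_distrib)
  also have "even \<dots>"
  proof (rule dvd_sum)
    fix k
    have "u k \<in> {-1,0,1}" "w k \<in> {-1,0,1}" using assms(1,2) unfolding unitv_def by auto
    moreover have "u k \<noteq> 0 \<longleftrightarrow> w k \<noteq> 0" using assms(3) by blast
    ultimately have "even (u k - w k)" by auto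
    thus "2 dvd (u k - w k) * z k" by simp
  qed
  finally show ?thesis .
qed




locale emb =
  fixes b :: int and n :: nat and rho :: "nat \<Rightarrow> nat \<Rightarrow> (nat \<Rightarrow> int)"
  assumes le: "lattice_embedding b n rho"
begin

abbreviation "N \<equiv> 5*n"

lemma SV: "i \<in> {1..n} \<Longrightarrow> j \<in> {1..5} \<Longrightarrow> std_vec N (rho i j)"
  using le unfolding lattice_embedding_def by blast

lemma PD: "i \<in> {1..n} \<Longrightarrow> j \<in> {1..5} \<Longrightarrow> i' \<in> {1..n} \<Longrightarrow> j' \<in> {1..5} \<Longrightarrow>
   dot N (rho i j) (rho i' j') = - Qn b i j i' j'"
proof -
  assume a: "i \<in> {1..n}" "j \<in> {1..5}" "i' \<in> {1..n}" "j' \<in> {1..5}"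
  have "std_pair N (rho i j) (rho i' j') = Qn b i j i' j'"
    using le a unfolding lattice_embedding_def by blast
  thus ?thesis by (simp add: std_pair_dot)
qed

lemma N2: "i \<in> {1..n} \<Longrightarrow> j \<in> {1,2,3} \<Longrightarrow> dot N (rho i j) (rho i j) = 2"
  using PD[of i j i j] by (auto simp: Qn_def Qform_def doubleton_eq_iff)

lemma SV3: "i \<in> {1..n} \<Longrightarrow> j \<in> {1,2,3} \<Longrightarrow> std_vec N (rho i j)"
  using SV by auto

lemma D:
  assumes i: "i \<in> {1..n}" "i' \<in> {1..n}" and j: "j \<in> {1,2,3}" "j' \<in> {1,2,3}"
    and ne: "(i,j) \<noteq> (i',j')" and q0: "Qn b i j i' j' = 0"
  shows "rho i j k = 0 \<or> rho i' j' k = 0"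
proof (rule ccontr)
  assume "\<not> ?thesis"
  hence k: "rho i j k \<noteq> 0" "rho i' j' k \<noteq> 0" by auto
  have d0: "dot N (rho i j) (rho i' j') = 0" using PD[of i j i' j'] i j q0 by auto
  have s: "\<forall>k. rho i j k \<noteq> 0 \<longleftrightarrow> rho i' j' k \<noteq> 0"
    by (rule share[OF SV3 N2 SV3 N2 d0 k]) (use i j in auto)
  have un: "unitv (rho i j)" "unitv (rho i' j')"
    using norm2_rep[OF SV3 N2] i j by blast+
  have ev: "even (dot N (rho i j) z - dot N (rho i' j') z)" for z
    by (rule parity[OF un s])
  have q: "Qn b i j i' j' = (if i = i' then Qform b j j' else 0)" by (simp add: Qn_def)
  have P: "\<And>j1 j2 i1 i2. i1 \<in> {1..n} \<Longrightarrow> i2 \<in> {1..n} \<Longrightarrow> j1 \<in> {1..5} \<Longrightarrow> j2 \<in> {1..5} \<Longrightarrow>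
     dot N (rho i1 j1) (rho i2 j2) = - (if i1 = i2 then Qform b j1 j2 else 0)"
    by (simp add: PD Qn_def)
  have "\<exists>z. odd (dot N (rho i j) z - dot N (rho i' j') z)"
  proof -
    consider "j = 1" "j' = 1" | "j = 2" | "j = 3" | "j = 1" "j' = 2" | "j = 1" "j' = 3" using j by auto
    thus ?thesis
    proof cases
      case 1
      hence "i \<noteq> i'" using ne by auto
      thus ?thesis using 1 i by (intro exI[of _ "rho i 5"]) (simp add: P Qform_def doubleton_eq_iff)
    next
      case 2
      thus ?thesis using i j ne q0 by (intro exI[of _ "rho i 3"]) (auto simp add: P Qform_def doubleton_eq_iff Qn_def)
    next
      case 3
      thus ?thesis using i j ne q0 by (intro exI[of _ "rho i 2"]) (auto simp add: P Qform_def doubleton_eq_iff Qn_def)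
    next
      case 4
      thus ?thesis using i j ne q0 by (intro exI[of _ "rho i' 3"]) (auto simp add: P Qform_def doubleton_eq_iff Qn_def)
    next
      case 5
      thus ?thesis using i j ne q0 by (intro exI[of _ "rho i' 2"]) (auto simp add: P Qform_def doubleton_eq_iff Qn_def)
    qed
  qed
  thus False using ev by blast
qed

end


context emb begin

definition BP :: "nat \<Rightarrow> (nat \<Rightarrow> nat) \<Rightarrow> bool" where
  "BP i g \<longleftrightarrow> (\<forall>r\<in>{1..5}. g r \<in> {1..N}) \<and> distinct [g 1, g 2, g 3, g 4, g 5] \<and>
     (\<forall>k. rho i 1 k \<noteq> 0 \<longleftrightarrow> k = g 1 \<or> k = g 2) \<and>
     (\<forall>k. rho i 2 k \<noteq> 0 \<longleftrightarrow> k = g 3 \<or> k = g 4) \<and>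
     (\<forall>k. rho i 3 k \<noteq> 0 \<longleftrightarrow> k = g 4 \<or> k = g 5) \<and>
     rho i 2 (g 4) * rho i 3 (g 4) = -1"

lemma unit3: "i \<in> {1..n} \<Longrightarrow> j \<in> {1,2,3} \<Longrightarrow> rho i j k \<in> {-1,0,1}"
  using norm2_rep[OF SV3 N2, of i j] unfolding unitv_def by blast

lemma BP_ex:
  assumes i: "i \<in> {1..n}"
  shows "\<exists>g. BP i g"
proof -
  obtain a1 a2 where A: "a1 \<noteq> a2" "a1 \<in> {1..N}" "a2 \<in> {1..N}" "\<forall>k. rho i 1 k \<noteq> 0 \<longleftrightarrow> (k = a1 \<or> k = a2)"
    using norm2_rep[OF SV3 N2, of i 1] i by auto
  obtain c d where C: "c \<noteq> d" "c \<in> {1..N}" "d \<in> {1..N}" "\<forall>k. rho i 2 k \<noteq> 0 \<longleftrightarrow> (k = c \<or> k = d)"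
    using norm2_rep[OF SV3 N2, of i 2] i by auto
  obtain c' d' where C': "c' \<noteq> d'" "c' \<in> {1..N}" "d' \<in> {1..N}" "\<forall>k. rho i 3 k \<noteq> 0 \<longleftrightarrow> (k = c' \<or> k = d')"
    using norm2_rep[OF SV3 N2, of i 3] i by auto
  have "dot N (rho i 2) (rho i 3) = -1" using PD[of i 2 i 3] i by (simp add: Qn_def Qform_def)
  hence eq: "rho i 2 c * rho i 3 c + rho i 2 d * rho i 3 d = -1" using dot_supp2[OF C] by simp
  have uc: "rho i 2 c \<in> {-1,1}" "rho i 2 d \<in> {-1,1}" using C(4) unit3[OF i, of 2] by auto
  have wc: "rho i 3 c \<in> {-1,0,1}" "rho i 3 d \<in> {-1,0,1}" using unit3[OF i, of 3] by auto
  have "\<exists>c0 s. {c0, s} = {c, d} \<and> c0 \<noteq> s \<and> rho i 3 c0 = 0 \<and> rho i 2 s * rho i 3 s = -1"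
  proof -
    have "(rho i 3 c = 0 \<and> rho i 2 d * rho i 3 d = -1) \<or> (rho i 3 d = 0 \<and> rho i 2 c * rho i 3 c = -1)"
      using eq uc wc by auto
    thus ?thesis using C(1) by (metis insert_commute)
  qed
  then obtain c0 s where S: "{c0, s} = {c, d}" "c0 \<noteq> s" "rho i 3 c0 = 0" "rho i 2 s * rho i 3 s = -1" by blast
  have s3: "rho i 3 s \<noteq> 0" using S(4) by auto
  hence "s = c' \<or> s = d'" using C'(4) by blast
  then obtain f where F: "{s, f} = {c', d'}" "s \<noteq> f" using C'(1) by (metis insert_commute)
  have D12: "rho i 1 k = 0 \<or> rho i 2 k = 0" for k by (rule D) (use i in \<open>auto simp: Qn_def Qform_def doubleton_eq_iff\<close>)
  have D13: "rho i 1 k = 0 \<or> rho i 3 k = 0" for k by (rule D) (use i in \<open>auto simp: Qn_def Qform_def doubleton_eq_iff\<close>)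
  have s2: "\<forall>k. rho i 2 k \<noteq> 0 \<longleftrightarrow> (k = c0 \<or> k = s)" using C(4) S(1) by auto
  have s3': "\<forall>k. rho i 3 k \<noteq> 0 \<longleftrightarrow> (k = s \<or> k = f)" using C'(4) F(1) by auto
  define g where "g = (\<lambda>r::nat. if r = 1 then a1 else if r = 2 then a2 else if r = 3 then c0 else if r = 4 then s else f)"
  have g: "g 1 = a1" "g 2 = a2" "g 3 = c0" "g 4 = s" "g 5 = f" by (auto simp: g_def)
  have "c0 \<noteq> f" using S(3) s3' by auto
  moreover have "a1 \<notin> {c0, s, f}" "a2 \<notin> {c0, s, f}"
    using D12[of a1] D12[of a2] D13[of a1] D13[of a2] A(4) s2 s3' by blast+
  ultimately have dist: "distinct [g 1, g 2, g 3, g 4, g 5]" using g A(1) S(2) F(2) by auto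
  have rng: "\<forall>r\<in>{1..5}. g r \<in> {1..N}"
  proof
    fix r :: nat assume "r \<in> {1..5}"
    hence "r = 1 \<or> r = 2 \<or> r = 3 \<or> r = 4 \<or> r = 5" by auto
    moreover have "c0 \<in> {1..N}" "s \<in> {1..N}" using S(1) C(2,3) by auto
    moreover have "f \<in> {1..N}" using F(1) C'(2,3) by auto
    ultimately show "g r \<in> {1..N}" using g A(2,3) by auto
  qed
  have "BP i g" unfolding BP_def using rng dist A(4) s2 s3' S(4) g by simp
  thus ?thesis by blast
qed

definition G :: "nat \<Rightarrow> nat \<Rightarrow> nat" where "G i = (SOME g. BP i g)"

lemma BPG: "i \<in> {1..n} \<Longrightarrow> BP i (G i)"
  unfolding G_def using BP_ex by (rule someI_ex) 

definition J :: "nat \<Rightarrow> nat" where "J r = (if r \<le> 2 then 1 else if r \<le> 4 then 2 else 3)"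

lemma supp_G: "i \<in> {1..n} \<Longrightarrow> r \<in> {1..5} \<Longrightarrow> rho i (J r) (G i r) \<noteq> 0"
  using BPG[of i] unfolding BP_def J_def
  by (auto simp: le_Suc_eq numeral_eq_Suc)

lemma cross:
  assumes "i \<in> {1..n}" "i' \<in> {1..n}" "i \<noteq> i'" "r \<in> {1..5}" "r' \<in> {1..5}"
  shows "G i r \<noteq> G i' r'"
proof
  assume e: "G i r = G i' r'"
  have "J r \<in> {1,2,3}" "J r' \<in> {1,2,3}" by (auto simp: J_def)
  from D[OF assms(1,2) this, of "G i r"] assms e supp_G[of i r] supp_G[of i' r']
  show False by (auto simp: Qn_def)
qed

lemma inblock:
  assumes "i \<in> {1..n}" "r \<in> {1..5}" "r' \<in> {1..5}" "G i r = G i r'"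
  shows "r = r'"
proof -
  have "distinct [G i 1, G i 2, G i 3, G i 4, G i 5]" using BPG[OF assms(1)] unfolding BP_def by blast
  moreover have "r = 1 \<or> r = 2 \<or> r = 3 \<or> r = 4 \<or> r = 5" "r' = 1 \<or> r' = 2 \<or> r' = 3 \<or> r' = 4 \<or> r' = 5"
    using assms(2,3) by auto
  ultimately show ?thesis using assms(4) by auto
qed

end



definition pos :: "nat \<Rightarrow> nat \<Rightarrow> nat" where "pos i r = r + 5*(i-1)"
definition blk :: "nat \<Rightarrow> nat" where "blk t = (t-1) div 5 + 1"
definition rr :: "nat \<Rightarrow> nat" where "rr t = (t-1) mod 5 + 1"

lemma pos_m1: "r \<in> {1..5} \<Longrightarrow> pos i r - 1 = (r - 1) + 5*(i-1)"
  unfolding pos_def by auto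
lemma blk_pos: assumes "i \<ge> 1" "r \<in> {1..5}" shows "blk (pos i r) = i"
proof -
  have "blk (pos i r) = ((r-1)+5*(i-1)) div 5 + 1" unfolding blk_def pos_m1[OF assms(2)] ..
  moreover have "r - 1 < 5" using assms by auto
  ultimately show ?thesis using assms by simp
qed
lemma rr_pos: assumes "i \<ge> 1" "r \<in> {1..5}" shows "rr (pos i r) = r"
proof -
  have "rr (pos i r) = ((r-1)+5*(i-1)) mod 5 + 1" unfolding rr_def pos_m1[OF assms(2)] ..
  moreover have "r - 1 < 5" using assms by auto
  ultimately show ?thesis using assms by simp
qed
lemma pos_blk: "t \<ge> 1 \<Longrightarrow> pos (blk t) (rr t) = t"
  unfolding blk_def rr_def pos_def by simp
lemma rr_rng: "rr t \<in> {1..5}" unfolding rr_def by auto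
lemma blk_rng: "t \<in> {1..5*n} \<Longrightarrow> blk t \<in> {1..n}"
  unfolding blk_def by auto
lemma pos_rng: "i \<in> {1..n} \<Longrightarrow> r \<in> {1..5} \<Longrightarrow> pos i r \<in> {1..5*n}"
  unfolding pos_def by auto
lemma pos_inj: "i \<ge> 1 \<Longrightarrow> i' \<ge> 1 \<Longrightarrow> r \<in> {1..5} \<Longrightarrow> r' \<in> {1..5} \<Longrightarrow>
   pos i r = pos i' r' \<longleftrightarrow> i = i' \<and> r = r'"
  by (metis blk_pos rr_pos)

context emb begin

definition q :: "nat \<Rightarrow> nat" where "q t = G (blk t) (rr t)"

lemma q_pos: "i \<in> {1..n} \<Longrightarrow> r \<in> {1..5} \<Longrightarrow> q (pos i r) = G i r"
  unfolding q_def using blk_pos rr_pos by auto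

lemma q_rng: "t \<in> {1..N} \<Longrightarrow> q t \<in> {1..N}"
  unfolding q_def using BPG[OF blk_rng] rr_rng unfolding BP_def by blast

lemma q_inj: "inj_on q {1..N}"
proof (rule inj_onI)
  fix t t' assume t: "t \<in> {1..N}" "t' \<in> {1..N}" and e: "q t = q t'"
  have b1: "blk t \<in> {1..n}" "blk t' \<in> {1..n}" using blk_rng t by auto
  have e': "G (blk t) (rr t) = G (blk t') (rr t')" using e unfolding q_def .
  have bb: "blk t = blk t'"
  proof (rule ccontr)
    assume "blk t \<noteq> blk t'"
    from cross[OF b1 this rr_rng rr_rng] e' show False by simp
  qed
  have "rr t = rr t'" by (rule inblock[OF b1(1) rr_rng rr_rng]) (use e' bb in simp)
  hence "pos (blk t) (rr t) = pos (blk t') (rr t')" using bb by simp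
  thus "t = t'" using pos_blk[of t] pos_blk[of t'] t by simp
qed

lemma q_bij: "bij_betw q {1..N} {1..N}"
proof -
  have "q ` {1..N} \<subseteq> {1..N}" using q_rng by blast
  from endo_inj_surj[OF _ this q_inj] show ?thesis unfolding bij_betw_def using q_inj by simp
qed

definition tau :: "nat \<Rightarrow> int" where "tau r = (if r = 1 \<or> r = 3 then 1 else -1)"

definition sg :: "nat \<Rightarrow> int" where "sg t = tau (rr t) * rho (blk t) (J (rr t)) (q t)"

lemma sg2: "t \<in> {1..N} \<Longrightarrow> sg t * sg t = 1"
proof -
  assume t: "t \<in> {1..N}"
  have "J (rr t) \<in> {1,2,3}" by (auto simp: J_def)
  hence "rho (blk t) (J (rr t)) (q t) \<in> {-1,1}"
    using unit3[OF blk_rng[OF t]] supp_G[OF blk_rng[OF t] rr_rng] unfolding q_def by blast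
  thus ?thesis unfolding sg_def tau_def by auto
qed

definition A :: "(nat \<Rightarrow> int) \<Rightarrow> (nat \<Rightarrow> int)" where
  "A x = (\<lambda>t. if t \<in> {1..N} then sg t * x (q t) else 0)"

definition qi where "qi = the_inv_into {1..N} q"

lemma qi: "k \<in> {1..N} \<Longrightarrow> qi k \<in> {1..N} \<and> q (qi k) = k"
proof -
  assume k: "k \<in> {1..N}"
  have im: "q ` {1..N} = {1..N}" using q_bij by (simp add: bij_betw_def)
  have "k \<in> q ` {1..N}" using k im by simp
  thus ?thesis unfolding qi_def using the_inv_into_into[OF q_inj] f_the_inv_into_f[OF q_inj] by blast
qed

lemma A_aut: "std_lattice_aut N A"
proof -
  have vec: "std_vec N (A x)" for x unfolding std_vec_def A_def by auto
  have add: "A (x + y) = A x + A y" for x y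
    unfolding A_def by (auto simp: fun_eq_iff distrib_left)
  have inj: "inj_on A {x. std_vec N x}"
  proof (rule inj_onI)
    fix x y assume x: "x \<in> {x. std_vec N x}" and y: "y \<in> {x. std_vec N x}" and e: "A x = A y"
    show "x = y"
    proof
      fix k show "x k = y k"
      proof (cases "k \<in> {1..N}")
        case True
        then obtain t where t: "t \<in> {1..N}" "q t = k" using qi by blast
        have "A x t = A y t" using e by simp
        hence "sg t * x k = sg t * y k" using t unfolding A_def by simp
        hence "sg t * (sg t * x k) = sg t * (sg t * y k)" by simp
        hence "sg t * sg t * x k = sg t * sg t * y k" by (simp only: mult.assoc)
        thus ?thesis using sg2[OF t(1)] by simp
      next
        case False
        have "x k = 0" "y k = 0" using x y False unfolding std_vec_def by blast+
        thus ?thesis by simp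
      qed
    qed
  qed
  have surj: "A ` {x. std_vec N x} = {x. std_vec N x}"
  proof
    show "A ` {x. std_vec N x} \<subseteq> {x. std_vec N x}" using vec by auto
    show "{x. std_vec N x} \<subseteq> A ` {x. std_vec N x}"
    proof
      fix y assume y: "y \<in> {x. std_vec N x}"
      define x where "x = (\<lambda>k. if k \<in> {1..N} then sg (qi k) * y (qi k) else 0)"
      have "std_vec N x" unfolding std_vec_def x_def by auto
      moreover have "A x = y"
      proof
        fix t show "A x t = y t"
        proof (cases "t \<in> {1..N}")
          case True
          have "qi (q t) = t" unfolding qi_def using True q_inj by (simp add: the_inv_into_f_f)
          hence "A x t = sg t * (sg t * y t)" using True q_rng[OF True] unfolding A_def x_def by simp
          thus ?thesis using sg2[OF True] by (simp add: mult.assoc[symmetric])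
        next
          case False thus ?thesis using y unfolding A_def std_vec_def by auto
        qed
      qed
      ultimately show "y \<in> A ` {x. std_vec N x}" by blast
    qed
  qed
  have pair: "std_pair N (A x) (A y) = std_pair N x y" for x y
  proof -
    have "(\<Sum>t\<in>{1..N}. A x t * A y t) = (\<Sum>t\<in>{1..N}. x (q t) * y (q t))"
    proof (rule sum.cong)
      fix t assume t: "t \<in> {1..N}"
      have "A x t * A y t = (sg t * sg t) * (x (q t) * y (q t))" using t unfolding A_def by (simp add: algebra_simps)
      thus "A x t * A y t = x (q t) * y (q t)" using sg2[OF t] by simp
    qed simp
    also have "\<dots> = (\<Sum>k\<in>{1..N}. x k * y k)"
      using sum.reindex_bij_betw[OF q_bij, of "\<lambda>k. x k * y k"] by simp
    finally show ?thesis unfolding std_pair_def by simp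
  qed
  show ?thesis unfolding std_lattice_aut_def bij_betw_def using add inj surj pair by blast
qed

end


context emb begin

lemma A_val: "i \<in> {1..n} \<Longrightarrow> r \<in> {1..5} \<Longrightarrow>
   A (rho i j) (pos i r) = tau r * rho i (J r) (G i r) * rho i j (G i r)"
  unfolding A_def sg_def using pos_rng[of i n r] blk_pos[of i r] rr_pos[of i r] q_pos[of i r] by simp

lemma A_zero:
  assumes i: "i \<in> {1..n}" and r: "r1 \<in> {1..5}" "r2 \<in> {1..5}"
    and s: "\<forall>k. rho i j k \<noteq> 0 \<longleftrightarrow> k = G i r1 \<or> k = G i r2"
    and t: "t \<noteq> pos i r1" "t \<noteq> pos i r2"
  shows "A (rho i j) t = 0"
proof (cases "t \<in> {1..N}")
  case True
  have "rho i j (q t) = 0"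
  proof (rule ccontr)
    assume "rho i j (q t) \<noteq> 0"
    hence "q t = q (pos i r1) \<or> q t = q (pos i r2)" using s q_pos[OF i r(1)] q_pos[OF i r(2)] by simp
    thus False using inj_onD[OF q_inj] True pos_rng[OF i r(1)] pos_rng[OF i r(2)] t by blast
  qed
  thus ?thesis using True unfolding A_def by simp
next
  case False thus ?thesis unfolding A_def by (rule if_not_P)
qed

lemma A_two:
  assumes i: "i \<in> {1..n}" and r: "r1 \<in> {1..5}" "r2 \<in> {1..5}" "r1 \<noteq> r2"
    and s: "\<forall>k. rho i j k \<noteq> 0 \<longleftrightarrow> k = G i r1 \<or> k = G i r2"
    and v: "A (rho i j) (pos i r1) = 1" "A (rho i j) (pos i r2) = -1"
  shows "A (rho i j) = e (pos i r1) - e (pos i r2)"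
proof
  fix t
  have ne: "pos i r1 \<noteq> pos i r2" using pos_inj[of i i r1 r2] i r by auto
  show "A (rho i j) t = (e (pos i r1) - e (pos i r2)) t"
  proof (cases "t = pos i r1 \<or> t = pos i r2")
    case True thus ?thesis using v ne by (auto simp: e_def)
  next
    case False thus ?thesis using A_zero[OF i r(1,2) s] by (auto simp: e_def)
  qed
qed

lemma unitnz: "i \<in> {1..n} \<Longrightarrow> j \<in> {1,2,3} \<Longrightarrow> rho i j k \<noteq> 0 \<Longrightarrow> rho i j k * rho i j k = 1"
  using unit3[of i j k] by auto

lemma A123:
  assumes i: "i \<in> {1..n}"
  shows "A (rho i 1) = e (1 + 5*(i-1)) - e (2 + 5*(i-1))"
    "A (rho i 2) = e (3 + 5*(i-1)) - e (4 + 5*(i-1))"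
    "A (rho i 3) = e (4 + 5*(i-1)) - e (5 + 5*(i-1))"
proof -
  have B: "BP i (G i)" by (rule BPG[OF i])
  have s1: "\<forall>k. rho i 1 k \<noteq> 0 \<longleftrightarrow> k = G i 1 \<or> k = G i 2"
   and s2: "\<forall>k. rho i 2 k \<noteq> 0 \<longleftrightarrow> k = G i 3 \<or> k = G i 4"
   and s3: "\<forall>k. rho i 3 k \<noteq> 0 \<longleftrightarrow> k = G i 4 \<or> k = G i 5"
   and p: "rho i 2 (G i 4) * rho i 3 (G i 4) = -1"
    using B unfolding BP_def by blast+
  have J: "J 1 = 1" "J 2 = 1" "J 3 = 2" "J 4 = 2" "J 5 = 3" by (auto simp: J_def)
  have T: "tau 1 = 1" "tau 2 = -1" "tau 3 = 1" "tau 4 = -1" "tau 5 = -1" by (auto simp: tau_def)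
  have u11: "rho i 1 (G i 1) * rho i 1 (G i 1) = 1" using unitnz[OF i, of 1] s1 by auto
  have u12: "rho i 1 (G i 2) * rho i 1 (G i 2) = 1" using unitnz[OF i, of 1] s1 by auto
  have u23: "rho i 2 (G i 3) * rho i 2 (G i 3) = 1" using unitnz[OF i, of 2] s2 by auto
  have u24: "rho i 2 (G i 4) * rho i 2 (G i 4) = 1" using unitnz[OF i, of 2] s2 by auto
  have u35: "rho i 3 (G i 5) * rho i 3 (G i 5) = 1" using unitnz[OF i, of 3] s3 by auto
  have P: "pos i 1 = 1 + 5*(i-1)" "pos i 2 = 2 + 5*(i-1)" "pos i 3 = 3 + 5*(i-1)"
      "pos i 4 = 4 + 5*(i-1)" "pos i 5 = 5 + 5*(i-1)" by (auto simp: pos_def)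
  show "A (rho i 1) = e (1 + 5*(i-1)) - e (2 + 5*(i-1))"
    using A_two[OF i _ _ _ s1] A_val[OF i, of 1 1] A_val[OF i, of 2 1] J T u11 u12 P
    by (simp add: mult.assoc)
  show "A (rho i 2) = e (3 + 5*(i-1)) - e (4 + 5*(i-1))"
    using A_two[OF i _ _ _ s2] A_val[OF i, of 3 2] A_val[OF i, of 4 2] J T u23 u24 P
    by (simp add: mult.assoc)
  show "A (rho i 3) = e (4 + 5*(i-1)) - e (5 + 5*(i-1))"
    using A_two[OF i _ _ _ s3] A_val[OF i, of 4 3] A_val[OF i, of 5 3] J T p u35 P
    by (simp add: mult.assoc)
qed

end



lemma block_sum:
  fixes F :: "nat \<Rightarrow> int"
  shows "(\<Sum>k\<in>{1..5*m}. F k) = (\<Sum>i\<in>{1..m}. F (pos i 1) + F (pos i 2) + F (pos i 3) + F (pos i 4) + F (pos i 5))"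
proof (induction m)
  case 0 thus ?case by simp
next
  case (Suc m)
  have "{1..5 * Suc m} = {1..5*m} \<union> {5*m+1, 5*m+2, 5*m+3, 5*m+4, 5*m+5}" by auto
  hence "(\<Sum>k\<in>{1..5*Suc m}. F k) = (\<Sum>k\<in>{1..5*m}. F k) + (\<Sum>k\<in>{5*m+1, 5*m+2, 5*m+3, 5*m+4, 5*m+5}. F k)"
    by (simp add: sum.union_disjoint)
  also have "(\<Sum>k\<in>{5*m+1, 5*m+2, 5*m+3, 5*m+4, 5*m+5}. F k) = F (pos (Suc m) 1) + F (pos (Suc m) 2) + F (pos (Suc m) 3) + F (pos (Suc m) 4) + F (pos (Suc m) 5)"
    by (simp add: pos_def add.commute)
  finally show ?case using Suc by simp
qed

context emb begin

definition w :: "nat \<Rightarrow> nat \<Rightarrow> int" where "w i = A (rho i 4)"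

lemma w_vec: "std_vec N (w i)" unfolding w_def A_def std_vec_def by auto

lemma A_pair: "std_vec N x \<Longrightarrow> std_vec N y \<Longrightarrow> dot N (A x) (A y) = dot N x y"
  using A_aut unfolding std_lattice_aut_def std_pair_dot by simp

lemma w_w: "i \<in> {1..n} \<Longrightarrow> i' \<in> {1..n} \<Longrightarrow> dot N (w i) (w i') = (if i = i' then 5 else 0)"
  unfolding w_def using A_pair[OF SV SV, of i 4 i' 4] PD[of i 4 i' 4]
  by (auto simp: Qn_def Qform_def)

lemma w_o: "i \<in> {1..n} \<Longrightarrow> i' \<in> {1..n} \<Longrightarrow> j \<in> {1,2,3} \<Longrightarrow> dot N (w i) (A (rho i' j)) = 0"
  unfolding w_def using A_pair[OF SV SV, of i 4 i' j] PD[of i 4 i' j]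
  by (auto simp: Qn_def Qform_def doubleton_eq_iff)

lemma dot_e: "s \<in> {1..N} \<Longrightarrow> s' \<in> {1..N} \<Longrightarrow> dot N x (e s - e s') = x s - x s'"
proof -
  have h: "(\<Sum>k\<in>{1..N}. x k * e s k) = x s" if "s \<in> {1..N}" for s
  proof -
    have "(\<Sum>k\<in>{1..N}. x k * e s k) = (\<Sum>k\<in>{1..N}. if k = s then x k else 0)"
      by (rule sum.cong) (auto simp: e_def)
    also have "\<dots> = x s" using that by simp
    finally show ?thesis .
  qed
  assume "s \<in> {1..N}" "s' \<in> {1..N}"
  thus ?thesis unfolding dot_def using h by (simp add: right_diff_distrib sum_subtractf)
qed

lemma w_eq:
  assumes i: "i \<in> {1..n}" and i': "i' \<in> {1..n}"
  shows "w i (pos i' 2) = w i (pos i' 1)" "w i (pos i' 4) = w i (pos i' 3)" "w i (pos i' 5) = w i (pos i' 3)"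
proof -
  have P: "pos i' 1 = 1 + 5*(i'-1)" "pos i' 2 = 2 + 5*(i'-1)" "pos i' 3 = 3 + 5*(i'-1)"
      "pos i' 4 = 4 + 5*(i'-1)" "pos i' 5 = 5 + 5*(i'-1)" by (auto simp: pos_def)
  have R: "pos i' r \<in> {1..N}" if "r \<in> {1..5}" for r using pos_rng[of i' n r] i' that by simp
  have "dot N (w i) (A (rho i' 1)) = 0" "dot N (w i) (A (rho i' 2)) = 0" "dot N (w i) (A (rho i' 3)) = 0"
    using w_o[OF i i'] by auto
  hence "w i (pos i' 1) - w i (pos i' 2) = 0" "w i (pos i' 3) - w i (pos i' 4) = 0" "w i (pos i' 4) - w i (pos i' 5) = 0"
    unfolding A123[OF i'] P[symmetric] using dot_e R by auto
  thus "w i (pos i' 2) = w i (pos i' 1)" "w i (pos i' 4) = w i (pos i' 3)" "w i (pos i' 5) = w i (pos i' 3)" by auto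
qed

definition al :: "nat \<Rightarrow> nat \<Rightarrow> int" where "al i i' = w i (pos i' 1)"
definition ga :: "nat \<Rightarrow> nat \<Rightarrow> int" where "ga i i' = w i (pos i' 3)"

lemma w_dot_blocks:
  assumes i: "i \<in> {1..n}" and i2: "i2 \<in> {1..n}"
  shows "dot N (w i) (w i2) = (\<Sum>i'\<in>{1..n}. 2 * (al i i' * al i2 i') + 3 * (ga i i' * ga i2 i'))"
  unfolding dot_def block_sum
  by (rule sum.cong) (auto simp: w_eq[OF i] w_eq[OF i2] al_def ga_def)

end



lemma one_hot:
  fixes f :: "nat \<Rightarrow> int"
  assumes fin: "finite S" and s: "(\<Sum>k\<in>S. (f k)^2) = 1"
  shows "\<exists>j\<in>S. f j \<in> {1,-1} \<and> (\<forall>k\<in>S. f k = (if k = j then f j else 0))"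
proof -
  have sq: "(\<forall>k\<in>S. f k \<in> {-1,0,1}) \<and> int (card {k\<in>S. f k \<noteq> 0}) = 1"
    by (rule sq_small[OF fin s]) simp
  hence u: "\<forall>k\<in>S. f k \<in> {-1,0,1}" and c: "card {k\<in>S. f k \<noteq> 0} = 1" by simp_all
  obtain j where j: "{k\<in>S. f k \<noteq> 0} = {j}" using c[unfolded One_nat_def card_1_singleton_iff] by blast
  have jS: "j \<in> S" "f j \<noteq> 0" using j by blast+
  have z: "f k = (if k = j then f j else 0)" if "k \<in> S" for k
  proof (cases "k = j")
    case False
    hence "k \<notin> {k\<in>S. f k \<noteq> 0}" using j by simp
    thus ?thesis using that False by simp
  qed simp
  have "f j \<in> {-1,0,1}" using u jS(1) by blast
  hence "f j \<in> {1,-1}" using jS(2) by auto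
  thus ?thesis using jS z by blast
qed

lemma sum_hot:
  fixes s s' :: int
  assumes "finite S" "j \<in> S"
  shows "(\<Sum>k\<in>S. (if k = j then s else 0) * (if k = j' then s' else 0)) = (if j = j' then s * s' else 0)"
proof -
  have "(\<Sum>k\<in>S. (if k = j then s else 0) * (if k = j' then s' else 0)) = (\<Sum>k\<in>S. if k = j then (if j = j' then s * s' else 0) else 0)"
    by (rule sum.cong) auto
  also have "\<dots> = (if j = j' then s * s' else 0)" using assms by simp
  finally show ?thesis .
qed

lemma two_three:
  fixes X Y :: int
  assumes e: "5 = 2 * X + 3 * Y" and x: "X \<ge> 0" and y: "Y \<ge> 0"
  shows "X = 1 \<and> Y = 1"
proof -
  have "Y \<le> 1" using e x by linarith
  hence "Y = 0 \<or> Y = 1" using y by linarith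
  moreover have "Y \<noteq> 0"
  proof
    assume "Y = 0"
    hence "(5::int) = 2 * X" using e by simp
    hence "(2::int) dvd 5" by (metis dvd_triv_left)
    thus False by simp
  qed
  ultimately have "Y = 1" by simp
  thus ?thesis using e by simp
qed

lemma XY0: "(0::int) = 2 * X + 3 * Y \<Longrightarrow> X \<in> {-1,0,1} \<Longrightarrow> Y \<in> {-1,0,1} \<Longrightarrow> X = 0 \<and> Y = 0"
  by auto

context emb begin

definition Pw where
  "Pw i j1 j2 s1 s2 \<longleftrightarrow> j1 \<in> {1..n} \<and> j2 \<in> {1..n} \<and> s1 \<in> {1,-1} \<and> s2 \<in> {1,-1} \<and>
     (\<forall>i'\<in>{1..n}. al i i' = (if i' = j1 then s1 else 0)) \<and> (\<forall>i'\<in>{1..n}. ga i i' = (if i' = j2 then s2 else 0))"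

lemma Pw_ex:
  assumes i: "i \<in> {1..n}"
  shows "\<exists>j1 j2 s1 s2. Pw i j1 j2 s1 s2"
proof -
  have "(5::int) = (\<Sum>i'\<in>{1..n}. 2 * (al i i' * al i i') + 3 * (ga i i' * ga i i'))"
    using w_dot_blocks[OF i i] w_w[OF i i] by simp
  also have "\<dots> = 2 * (\<Sum>i'\<in>{1..n}. (al i i')^2) + 3 * (\<Sum>i'\<in>{1..n}. (ga i i')^2)"
    by (simp add: sum.distrib sum_distrib_left power2_eq_square)
  finally have e: "5 = 2 * (\<Sum>i'\<in>{1..n}. (al i i')^2) + 3 * (\<Sum>i'\<in>{1..n}. (ga i i')^2)" .
  have "(\<Sum>i'\<in>{1..n}. (al i i')^2) \<ge> 0" "(\<Sum>i'\<in>{1..n}. (ga i i')^2) \<ge> 0" by (auto intro: sum_nonneg)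
  with e have both: "(\<Sum>i'\<in>{1..n}. (al i i')^2) = 1 \<and> (\<Sum>i'\<in>{1..n}. (ga i i')^2) = 1" by (rule two_three)
  from one_hot[OF _ conjunct1[OF both]] obtain j1 where
    j1: "j1 \<in> {1..n}" "al i j1 \<in> {1,-1}" "\<forall>k\<in>{1..n}. al i k = (if k = j1 then al i j1 else 0)" by blast
  from one_hot[OF _ conjunct2[OF both]] obtain j2 where
    j2: "j2 \<in> {1..n}" "ga i j2 \<in> {1,-1}" "\<forall>k\<in>{1..n}. ga i k = (if k = j2 then ga i j2 else 0)" by blast
  have "Pw i j1 j2 (al i j1) (ga i j2)" unfolding Pw_def using j1 j2 by blast
  thus ?thesis by blast
qed

lemma w_form:
  assumes i: "i \<in> {1..n}" and P: "Pw i j1 j2 s1 s2"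
  shows "w i = (\<lambda>k. s1 * (e (pos j1 1) k + e (pos j1 2) k)
                 + s2 * (e (pos j2 3) k + e (pos j2 4) k + e (pos j2 5) k))"
proof
  fix k
  have j: "j1 \<in> {1..n}" "j2 \<in> {1..n}" using P unfolding Pw_def by auto
  have al: "\<forall>i'\<in>{1..n}. al i i' = (if i' = j1 then s1 else 0)" and ga: "\<forall>i'\<in>{1..n}. ga i i' = (if i' = j2 then s2 else 0)"
    using P unfolding Pw_def by auto
  show "w i k = s1 * (e (pos j1 1) k + e (pos j1 2) k)
                 + s2 * (e (pos j2 3) k + e (pos j2 4) k + e (pos j2 5) k)"
  proof (cases "k \<in> {1..N}")
    case False
    have "pos jj r \<noteq> k" if "jj \<in> {1..n}" "r \<in> {1..5}" for jj r using pos_rng[of jj n r] that False by auto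
    hence "e (pos jj r) k = 0" if "jj \<in> {1..n}" "r \<in> {1..5}" for jj r using that by (auto simp: e_def)
    moreover have "w i k = 0" using False unfolding w_def A_def by (rule if_not_P)
    ultimately show ?thesis using j by simp
  next
    case True
    define i' r where "i' = blk k" "r = rr k"
    have ir: "i' \<in> {1..n}" "r \<in> {1..5}" using blk_rng[OF True] rr_rng unfolding i'_r_def by auto
    have k: "k = pos i' r" using pos_blk[of k] True unfolding i'_r_def by auto
    have E: "e (pos jj r0) (pos i' r) = (if jj = i' \<and> r0 = r then 1 else 0)" if "jj \<in> {1..n}" "r0 \<in> {1..5}" for jj r0
      using pos_inj[of jj i' r0 r] that ir by (auto simp: e_def)
    have "r = 1 \<or> r = 2 \<or> r = 3 \<or> r = 4 \<or> r = 5" using ir by auto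
    thus ?thesis unfolding k using E[OF j(1)] E[OF j(2)] w_eq[OF i ir(1)] al[rule_format, OF ir(1)] ga[rule_format, OF ir(1)]
      by (auto simp: al_def ga_def)
  qed
qed

lemma Pw_inj:
  assumes i: "i \<in> {1..n}" "i2 \<in> {1..n}" "i \<noteq> i2" and P: "Pw i j1 j2 s1 s2" "Pw i2 j1' j2' s1' s2'"
  shows "j1 \<noteq> j1' \<and> j2 \<noteq> j2'"
proof -
  have j: "j1 \<in> {1..n}" "j2 \<in> {1..n}" and s: "s1 \<in> {1,-1}" "s2 \<in> {1,-1}" "s1' \<in> {1,-1}" "s2' \<in> {1,-1}"
    using P unfolding Pw_def by auto
  have "(0::int) = (\<Sum>i'\<in>{1..n}. 2 * (al i i' * al i2 i') + 3 * (ga i i' * ga i2 i'))"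
    using w_dot_blocks[OF i(1,2)] w_w[OF i(1,2)] i(3) by simp
  also have "\<dots> = (\<Sum>i'\<in>{1..n}. 2 * ((if i' = j1 then s1 else 0) * (if i' = j1' then s1' else 0))
        + 3 * ((if i' = j2 then s2 else 0) * (if i' = j2' then s2' else 0)))"
    by (rule sum.cong) (use P in \<open>auto simp: Pw_def\<close>)
  also have "\<dots> = 2 * (if j1 = j1' then s1 * s1' else 0) + 3 * (if j2 = j2' then s2 * s2' else 0)"
  proof -
    have h1: "(\<Sum>i'\<in>{1..n}. (if i' = j1 then s1 else 0) * (if i' = j1' then s1' else 0)) = (if j1 = j1' then s1 * s1' else 0)"
      by (rule sum_hot) (use j in auto)
    have h2: "(\<Sum>i'\<in>{1..n}. (if i' = j2 then s2 else 0) * (if i' = j2' then s2' else 0)) = (if j2 = j2' then s2 * s2' else 0)"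
      by (rule sum_hot) (use j in auto)
    show ?thesis unfolding sum.distrib sum_distrib_left[symmetric] h1 h2 ..
  qed
  finally have "0 = 2 * (if j1 = j1' then s1 * s1' else 0) + 3 * (if j2 = j2' then s2 * s2' else 0)" .
  moreover have X: "(if j1 = j1' then s1 * s1' else 0) \<in> {-1,0,1}" "(if j2 = j2' then s2 * s2' else 0) \<in> {-1,0,1}"
    using s by auto
  ultimately have "(if j1 = j1' then s1 * s1' else 0) = 0 \<and> (if j2 = j2' then s2 * s2' else 0) = 0"
    using XY0 by blast
  moreover have "s1 * s1' \<noteq> 0" "s2 * s2' \<noteq> 0" using s by auto
  ultimately show ?thesis by (metis (full_types))
qed

end



lemma perm_from:
  assumes inj: "inj_on f {1..n}" and rng: "\<forall>i\<in>{1..n}. f i \<in> {1..n}"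
  shows "(\<lambda>i. if i \<in> {1..n} then f i else i) permutes {1..(n::nat)}"
proof (rule bij_imp_permutes)
  let ?g = "\<lambda>i. if i \<in> {1..n} then f i else i"
  have i2: "inj_on ?g {1..n}"
  proof (rule inj_onI)
    fix x y assume x: "x \<in> {1..n}" and y: "y \<in> {1..n}" and xy: "?g x = ?g y"
    have "f x = f y" using xy x y by simp
    thus "x = y" using inj_onD[OF inj _ x y] by blast
  qed
  have "?g ` {1..n} \<subseteq> {1..n}"
  proof
    fix z assume "z \<in> ?g ` {1..n}"
    then obtain x where x: "x \<in> {1..n}" "z = ?g x" by blast
    hence "z = f x" by simp
    thus "z \<in> {1..n}" using rng x(1) by blast
  qed
  from endo_inj_surj[OF _ this i2] show "bij_betw ?g {1..n} {1..n}" unfolding bij_betw_def using i2 by simp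
next
  fix x assume "x \<notin> {1..n}"
  thus "(if x \<in> {1..n} then f x else x) = x" by (rule if_not_P)
qed

theorem mainTheorem14:
  fixes b :: int and n :: nat and rho :: "nat \<Rightarrow> nat \<Rightarrow> (nat \<Rightarrow> int)"
  assumes "b \<ge> 2"
    and "lattice_embedding b n rho"
  shows "\<exists>A. std_lattice_aut (5*n) A \<and>
    (\<exists>\<sigma>1 \<sigma>2. \<sigma>1 permutes {1..n} \<and> \<sigma>2 permutes {1..n} \<and>
      (\<forall>i\<in>{1..n}.
         A (rho i 1) = e (1 + 5*(i-1)) - e (2 + 5*(i-1)) \<and>
         A (rho i 2) = e (3 + 5*(i-1)) - e (4 + 5*(i-1)) \<and>
         A (rho i 3) = e (4 + 5*(i-1)) - e (5 + 5*(i-1)) \<and>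
         (\<exists>s1 s2 :: int. s1 \<in> {1, -1} \<and> s2 \<in> {1, -1} \<and>
            A (rho i 4) =
              (\<lambda>k. s1 * (e (1 + 5*(\<sigma>1 i - 1)) k + e (2 + 5*(\<sigma>1 i - 1)) k)
                 + s2 * (e (3 + 5*(\<sigma>2 i - 1)) k + e (4 + 5*(\<sigma>2 i - 1)) k
                         + e (5 + 5*(\<sigma>2 i - 1)) k)))))"
proof -
  interpret E: emb b n rho using assms(2) by unfold_locales
  define F1 where "F1 i = (SOME j1. \<exists>j2 s1 s2. E.Pw i j1 j2 s1 s2)" for i
  define F2 where "F2 i = (SOME j2. \<exists>s1 s2. E.Pw i (F1 i) j2 s1 s2)" for i
  define F3 where "F3 i = (SOME s1. \<exists>s2. E.Pw i (F1 i) (F2 i) s1 s2)" for i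
  define F4 where "F4 i = (SOME s2. E.Pw i (F1 i) (F2 i) (F3 i) s2)" for i
  have F: "\<forall>i\<in>{1..n}. E.Pw i (F1 i) (F2 i) (F3 i) (F4 i)"
  proof
    fix i assume i: "i \<in> {1..n}"
    have "\<exists>j2 s1 s2. E.Pw i (F1 i) j2 s1 s2" unfolding F1_def by (rule someI_ex) (rule E.Pw_ex[OF i])
    hence "\<exists>s1 s2. E.Pw i (F1 i) (F2 i) s1 s2" unfolding F2_def by (rule someI_ex)
    hence "\<exists>s2. E.Pw i (F1 i) (F2 i) (F3 i) s2" unfolding F3_def by (rule someI_ex)
    thus "E.Pw i (F1 i) (F2 i) (F3 i) (F4 i)" unfolding F4_def by (rule someI_ex)
  qed
  define \<sigma>1 where "\<sigma>1 = (\<lambda>i. if i \<in> {1..n} then F1 i else i)"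
  define \<sigma>2 where "\<sigma>2 = (\<lambda>i. if i \<in> {1..n} then F2 i else i)"
  have p1: "\<sigma>1 permutes {1..n}" unfolding \<sigma>1_def
  proof (rule perm_from)
    show "inj_on F1 {1..n}" using E.Pw_inj F unfolding inj_on_def by blast
    show "\<forall>i\<in>{1..n}. F1 i \<in> {1..n}" using F unfolding E.Pw_def by blast
  qed
  have p2: "\<sigma>2 permutes {1..n}" unfolding \<sigma>2_def
  proof (rule perm_from)
    show "inj_on F2 {1..n}" using E.Pw_inj F unfolding inj_on_def by blast
    show "\<forall>i\<in>{1..n}. F2 i \<in> {1..n}" using F unfolding E.Pw_def by blast
  qed
  have main: "\<forall>i\<in>{1..n}.
         E.A (rho i 1) = e (1 + 5*(i-1)) - e (2 + 5*(i-1)) \<and>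
         E.A (rho i 2) = e (3 + 5*(i-1)) - e (4 + 5*(i-1)) \<and>
         E.A (rho i 3) = e (4 + 5*(i-1)) - e (5 + 5*(i-1)) \<and>
         (\<exists>s1 s2 :: int. s1 \<in> {1, -1} \<and> s2 \<in> {1, -1} \<and>
            E.A (rho i 4) =
              (\<lambda>k. s1 * (e (1 + 5*(\<sigma>1 i - 1)) k + e (2 + 5*(\<sigma>1 i - 1)) k)
                 + s2 * (e (3 + 5*(\<sigma>2 i - 1)) k + e (4 + 5*(\<sigma>2 i - 1)) k
                         + e (5 + 5*(\<sigma>2 i - 1)) k)))"
  proof
    fix i assume i: "i \<in> {1..n}"
    have Pi: "E.Pw i (F1 i) (F2 i) (F3 i) (F4 i)" using F i by blast
    have sg1: "\<sigma>1 i = F1 i" unfolding \<sigma>1_def using i by (rule if_P)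
    have sg2: "\<sigma>2 i = F2 i" unfolding \<sigma>2_def using i by (rule if_P)
    have s: "F3 i \<in> {1,-1}" "F4 i \<in> {1,-1}" using Pi unfolding E.Pw_def by auto
    have w: "E.A (rho i 4) =
              (\<lambda>k. F3 i * (e (1 + 5*(\<sigma>1 i - 1)) k + e (2 + 5*(\<sigma>1 i - 1)) k)
                 + F4 i * (e (3 + 5*(\<sigma>2 i - 1)) k + e (4 + 5*(\<sigma>2 i - 1)) k
                         + e (5 + 5*(\<sigma>2 i - 1)) k))"
      using E.w_form[OF i Pi] unfolding E.w_def pos_def sg1 sg2 .
    show "E.A (rho i 1) = e (1 + 5*(i-1)) - e (2 + 5*(i-1)) \<and>
         E.A (rho i 2) = e (3 + 5*(i-1)) - e (4 + 5*(i-1)) \<and>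
         E.A (rho i 3) = e (4 + 5*(i-1)) - e (5 + 5*(i-1)) \<and>
         (\<exists>s1 s2 :: int. s1 \<in> {1, -1} \<and> s2 \<in> {1, -1} \<and>
            E.A (rho i 4) =
              (\<lambda>k. s1 * (e (1 + 5*(\<sigma>1 i - 1)) k + e (2 + 5*(\<sigma>1 i - 1)) k)
                 + s2 * (e (3 + 5*(\<sigma>2 i - 1)) k + e (4 + 5*(\<sigma>2 i - 1)) k
                         + e (5 + 5*(\<sigma>2 i - 1)) k)))"
      using E.A123[OF i] s w by blast
  qed
  show ?thesis using E.A_aut p1 p2 main by blast
qed



end
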